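(* Let $(X_n)_{n\ge0}$ be a stationary and ergodic process with $\sum_{i=0}^\infty|\mathrm{Cov}(X_0,X_i)|<\infty$ and let $\mu=\mathbb{E}X_0$. Let $v\ge1$ be an integer, and assume $\mathbb{E}[X_0^2]<\infty$ if $v\in\{1,2\}$, respectively $\mathbb{E}|X_0|^v<\infty$ if $v>2$. Then, as $n\to\infty$, $$\frac1n\sum_{i=1}^n(X_i-\mu)^v\big(|X_i-\bar X_n|-|X_i-\mu|\big)=(\bar X_n-\mu)\,\mathbb{E}[(X_0-\mu)^v\,\mathrm{sgn}(\mu-X_0)]+o_P(1/\sqrt n).$$
   Context: $\bar X_n=\frac1n\sum_{i=1}^nX_i$; $\mathrm{sgn}(x)=-1_{(x<0)}+1_{(x>0)}$; $Y_n=o_P(a_n)$ means $Y_n/a_n\to0$ in probability. *)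

theory Defs
  imports "HOL-Probability.Probability"
begin

definition seq_space :: "(nat \<Rightarrow> real) measure" where
  "seq_space = PiM UNIV (\<lambda>_. borel)"

definition seq_law :: "'a measure \<Rightarrow> (nat \<Rightarrow> 'a \<Rightarrow> real) \<Rightarrow> (nat \<Rightarrow> real) measure" where
  "seq_law M X = distr M seq_space (\<lambda>\<omega> i. X i \<omega>)"

definition seq_shift :: "(nat \<Rightarrow> real) \<Rightarrow> (nat \<Rightarrow> real)" where
  "seq_shift f = (\<lambda>i. f (Suc i))"

definition stationary_process :: "'a measure \<Rightarrow> (nat \<Rightarrow> 'a \<Rightarrow> real) \<Rightarrow> bool" where
  "stationary_process M X \<longleftrightarrow>
     (\<forall>k. distr M seq_space (\<lambda>\<omega> i. X (i + k) \<omega>) = distr M seq_space (\<lambda>\<omega> i. X i \<omega>))"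

definition ergodic_process :: "'a measure \<Rightarrow> (nat \<Rightarrow> 'a \<Rightarrow> real) \<Rightarrow> bool" where
  "ergodic_process M X \<longleftrightarrow>
     (\<forall>A \<in> sets seq_space. seq_shift -` A \<inter> space seq_space = A \<longrightarrow>
        measure (seq_law M X) A = 0 \<or> measure (seq_law M X) A = 1)"

definition covariance :: "'a measure \<Rightarrow> ('a \<Rightarrow> real) \<Rightarrow> ('a \<Rightarrow> real) \<Rightarrow> real" where
  "covariance M Y Z = (\<integral>\<omega>. (Y \<omega> - (\<integral>x. Y x \<partial>M)) * (Z \<omega> - (\<integral>x. Z x \<partial>M)) \<partial>M)"

definition small_o_P :: "'a measure \<Rightarrow> (nat \<Rightarrow> 'a \<Rightarrow> real) \<Rightarrow> (nat \<Rightarrow> real) \<Rightarrow> bool" where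
  "small_o_P M Y a \<longleftrightarrow>
     (\<forall>e>0. (\<lambda>n. measure M {\<omega> \<in> space M. \<bar>Y n \<omega> / a n\<bar> > e}) \<longlonglongrightarrow> 0)"

definition sample_mean :: "(nat \<Rightarrow> 'a \<Rightarrow> real) \<Rightarrow> nat \<Rightarrow> 'a \<Rightarrow> real" where
  "sample_mean X n \<omega> = (\<Sum>i=1..n. X i \<omega>) / real n"

end

theory Submission
  imports Defs
begin
lemma space_seq_space[simp]: "space seq_space = UNIV"
  by (simp add: seq_space_def space_PiM)

lemma seq_coord_meas[measurable]: "(\<lambda>t. t i) \<in> borel_measurable seq_space"
  unfolding seq_space_def by (rule measurable_component_singleton) auto

definition Ssum :: "(real \<Rightarrow> real) \<Rightarrow> nat \<Rightarrow> (nat \<Rightarrow> real) \<Rightarrow> real" where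
  "Ssum h k t = (\<Sum>i<k. h (t i))"

fun MN :: "(real \<Rightarrow> real) \<Rightarrow> nat \<Rightarrow> (nat \<Rightarrow> real) \<Rightarrow> real" where
  "MN h 0 t = 0"
| "MN h (Suc N) t = max (MN h N t) (Ssum h (Suc N) t)"

lemma Ssum_meas[measurable]: "h \<in> borel_measurable borel \<Longrightarrow> Ssum h k \<in> borel_measurable seq_space"
  unfolding Ssum_def by (intro borel_measurable_sum measurable_compose[OF seq_coord_meas]) auto

lemma MN_meas[measurable]: "h \<in> borel_measurable borel \<Longrightarrow> (\<lambda>t. MN h N t) \<in> borel_measurable seq_space"
proof (induction N)
  case 0 then show ?case by simp
next
  case (Suc N)
  then show ?case using Ssum_meas[of h "Suc N"] by (simp add: borel_measurable_max)
qed

lemma Ssum_0[simp]: "Ssum h 0 t = 0" by (simp add: Ssum_def)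

lemma Ssum_Suc_shift: "Ssum h (Suc k) t = h (t 0) + Ssum h k (seq_shift t)"
  unfolding Ssum_def seq_shift_def by (simp only: sum.lessThan_Suc_shift)

lemma MN_ge: "k \<le> N \<Longrightarrow> Ssum h k t \<le> MN h N t"
proof (induction N)
  case 0 then show ?case by simp
next
  case (Suc N) then show ?case by (cases "k = Suc N") auto
qed

lemma MN_attained: "\<exists>k\<le>N. MN h N t = Ssum h k t"
proof (induction N)
  case 0 then show ?case by (intro exI[of _ 0]) simp
next
  case (Suc N)
  then obtain k where "k \<le> N" "MN h N t = Ssum h k t" by blast
  show ?case
  proof (cases "MN h N t \<le> Ssum h (Suc N) t")
    case True then show ?thesis by (intro exI[of _ "Suc N"]) (simp add: max_def)
  next
    case False then show ?thesis using \<open>k \<le> N\<close> \<open>MN h N t = Ssum h k t\<close>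
      by (intro exI[of _ k]) (simp add: max_def)
  qed
qed

lemma MN_nonneg: "0 \<le> MN h N t"
  using MN_ge[of 0 N h t] by simp

lemma MN_step: "MN h N t > 0 \<Longrightarrow> MN h N t \<le> h (t 0) + MN h N (seq_shift t)"
proof -
  assume pos: "MN h N t > 0"
  obtain k where k: "k \<le> N" "MN h N t = Ssum h k t" using MN_attained by blast
  then have "k \<noteq> 0" using pos by (cases "k = 0") auto
  then obtain j where j: "k = Suc j" by (cases k) auto
  have "Ssum h j (seq_shift t) \<le> MN h N (seq_shift t)" using k j by (intro MN_ge) auto
  then show ?thesis using k j Ssum_Suc_shift[of h j t] by simp
qed

lemma MN_pointwise: "(if MN h N t > 0 then h (t 0) else 0) \<ge> MN h N t - MN h N (seq_shift t)"
  using MN_step[of h N t] MN_nonneg[of h N t] MN_nonneg[of h N "seq_shift t"] by auto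

lemma MN_bound: "\<bar>MN h N t\<bar> \<le> (\<Sum>i<N. \<bar>h (t i)\<bar>)"
proof -
  obtain k where k: "k \<le> N" "MN h N t = Ssum h k t" using MN_attained by blast
  have "\<bar>Ssum h k t\<bar> \<le> (\<Sum>i<k. \<bar>h (t i)\<bar>)" unfolding Ssum_def by (rule sum_abs)
  also have "\<dots> \<le> (\<Sum>i<N. \<bar>h (t i)\<bar>)" using k by (intro sum_mono2) auto
  finally show ?thesis using k by simp
qed

locale statp = prob_space M for M :: "'a measure" +
  fixes X :: "nat \<Rightarrow> 'a \<Rightarrow> real"
  assumes Xmeas[measurable]: "\<And>i. X i \<in> borel_measurable M"
    and stat: "stationary_process M X"
begin

lemma seqX_meas[measurable]: "(\<lambda>\<omega> i. X (i + k) \<omega>) \<in> measurable M seq_space"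
  unfolding seq_space_def by (rule measurable_PiM_single') auto

lemma seqX0_meas[measurable]: "(\<lambda>\<omega> i. X i \<omega>) \<in> measurable M seq_space"
  using seqX_meas[of 0] by simp

lemma stat_eq: "distr M seq_space (\<lambda>\<omega> i. X (i + k) \<omega>) = distr M seq_space (\<lambda>\<omega> i. X i \<omega>)"
  using stat unfolding stationary_process_def by blast

lemma stat_integral:
  assumes F: "F \<in> borel_measurable seq_space"
  shows "(\<integral>\<omega>. F (\<lambda>i. X (i + k) \<omega>) \<partial>M) = (\<integral>\<omega>. (F (\<lambda>i. X i \<omega>) :: real) \<partial>M)"
proof -
  have "(\<integral>\<omega>. F (\<lambda>i. X (i + k) \<omega>) \<partial>M) = integral\<^sup>L (distr M seq_space (\<lambda>\<omega> i. X (i + k) \<omega>)) F"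
    by (rule integral_distr[symmetric]) (auto simp: F)
  also have "\<dots> = integral\<^sup>L (distr M seq_space (\<lambda>\<omega> i. X i \<omega>)) F" by (simp only: stat_eq)
  also have "\<dots> = (\<integral>\<omega>. F (\<lambda>i. X i \<omega>) \<partial>M)"
    by (rule integral_distr) (auto simp: F)
  finally show ?thesis .
qed

lemma stat_integrable:
  assumes F: "F \<in> borel_measurable seq_space"
  shows "integrable M (\<lambda>\<omega>. F (\<lambda>i. X (i + k) \<omega>)) \<longleftrightarrow> integrable M (\<lambda>\<omega>. (F (\<lambda>i. X i \<omega>) :: real))"
proof -
  have "integrable M (\<lambda>\<omega>. F (\<lambda>i. X (i + k) \<omega>)) \<longleftrightarrow> integrable (distr M seq_space (\<lambda>\<omega> i. X (i + k) \<omega>)) F"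
    by (rule integrable_distr_eq[symmetric]) (auto simp: F)
  also have "\<dots> \<longleftrightarrow> integrable (distr M seq_space (\<lambda>\<omega> i. X i \<omega>)) F" by (simp only: stat_eq)
  also have "\<dots> \<longleftrightarrow> integrable M (\<lambda>\<omega>. F (\<lambda>i. X i \<omega>))"
    by (rule integrable_distr_eq) (auto simp: F)
  finally show ?thesis .
qed

lemma Xi_integrable:
  fixes h :: "real \<Rightarrow> real"
  assumes h[measurable]: "h \<in> borel_measurable borel"
  shows "integrable M (\<lambda>\<omega>. h (X i \<omega>)) \<longleftrightarrow> integrable M (\<lambda>\<omega>. h (X 0 \<omega>))"
  using stat_integrable[of "\<lambda>t. h (t 0)" i] by simp

lemma Xi_integral:
  fixes h :: "real \<Rightarrow> real"
  assumes h[measurable]: "h \<in> borel_measurable borel"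
  shows "(\<integral>\<omega>. h (X i \<omega>) \<partial>M) = (\<integral>\<omega>. h (X 0 \<omega>) \<partial>M)"
  using stat_integral[of "\<lambda>t. h (t 0)" i] by simp

lemma maximal:
  assumes h[measurable]: "h \<in> borel_measurable borel" and hi: "integrable M (\<lambda>\<omega>. h (X 0 \<omega>))"
  shows "0 \<le> (\<integral>\<omega>. (if MN h N (\<lambda>i. X i \<omega>) > 0 then h (X 0 \<omega>) else 0) \<partial>M)"
proof -
  have mMN[measurable]: "(\<lambda>\<omega>. MN h N (\<lambda>i. X (i + k) \<omega>)) \<in> borel_measurable M" for k
    by (rule measurable_compose[OF seqX_meas MN_meas[OF h]])
  have hint: "integrable M (\<lambda>\<omega>. h (X i \<omega>))" for i using Xi_integrable[OF h, of i] hi by simp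
  have int0: "integrable M (\<lambda>\<omega>. MN h N (\<lambda>i. X (i + 0) \<omega>))"
  proof (rule Bochner_Integration.integrable_bound)
    show "integrable M (\<lambda>\<omega>. \<Sum>i<N. \<bar>h (X i \<omega>)\<bar>)" using hint by auto
    show "AE x in M. norm (MN h N (\<lambda>i. X (i + 0) x)) \<le> norm (\<Sum>i<N. \<bar>h (X i x)\<bar>)"
      using MN_bound by (auto intro!: AE_I2 simp: sum_nonneg)
  qed simp
  have int1: "integrable M (\<lambda>\<omega>. MN h N (\<lambda>i. X (i + 1) \<omega>))"
    using int0 stat_integrable[OF MN_meas[OF h, of N], where k=1] by simp
  have shift: "seq_shift (\<lambda>i. X i \<omega>) = (\<lambda>i. X (i + 1) \<omega>)" for \<omega>
    by (simp add: seq_shift_def)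
  have "0 = (\<integral>\<omega>. MN h N (\<lambda>i. X (i + 0) \<omega>) \<partial>M) - (\<integral>\<omega>. MN h N (\<lambda>i. X (i + 1) \<omega>) \<partial>M)"
    using stat_integral[OF MN_meas[OF h, of N], where k=1] by simp
  also have "\<dots> = (\<integral>\<omega>. MN h N (\<lambda>i. X (i + 0) \<omega>) - MN h N (\<lambda>i. X (i + 1) \<omega>) \<partial>M)"
    using int0 int1 by simp
  also have "\<dots> \<le> (\<integral>\<omega>. (if MN h N (\<lambda>i. X i \<omega>) > 0 then h (X 0 \<omega>) else 0) \<partial>M)"
  proof (rule integral_mono)
    show "integrable M (\<lambda>\<omega>. MN h N (\<lambda>i. X (i + 0) \<omega>) - MN h N (\<lambda>i. X (i + 1) \<omega>))"
      using int0 int1 by simp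
    show "integrable M (\<lambda>\<omega>. if MN h N (\<lambda>i. X i \<omega>) > 0 then h (X 0 \<omega>) else 0)"
      by (rule Bochner_Integration.integrable_bound[OF integrable_abs[OF hi]]) (auto intro!: AE_I2)
    show "MN h N (\<lambda>i. X (i + 0) \<omega>) - MN h N (\<lambda>i. X (i + 1) \<omega>)
         \<le> (if MN h N (\<lambda>i. X i \<omega>) > 0 then h (X 0 \<omega>) else 0)" for \<omega>
      using MN_pointwise[of h N "\<lambda>i. X i \<omega>"] by (simp add: shift)
  qed
  finally show ?thesis .
qed

end

definition Wset :: "(real \<Rightarrow> real) \<Rightarrow> (nat \<Rightarrow> real) set" where
  "Wset h = {t. \<forall>K::nat. \<exists>n. Ssum h n t > real K}"

lemma Wset_meas: assumes h[measurable]: "h \<in> borel_measurable borel" shows "Wset h \<in> sets seq_space"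
proof -
  have "Wset h = {t \<in> space seq_space. \<forall>K::nat. \<exists>n::nat. Ssum h n t > real K}"
    by (simp add: Wset_def)
  also have "\<dots> \<in> sets seq_space" by measurable
  finally show ?thesis .
qed

lemma Wset_shift: "seq_shift t \<in> Wset h \<longleftrightarrow> t \<in> Wset h"
proof
  assume A: "seq_shift t \<in> Wset h"
  show "t \<in> Wset h" unfolding Wset_def mem_Collect_eq
  proof
    fix K :: nat
    obtain n where n: "Ssum h n (seq_shift t) > real (K + nat \<lceil>\<bar>h (t 0)\<bar>\<rceil>)"
      using A unfolding Wset_def by blast
    have c: "real_of_int \<lceil>\<bar>h (t 0)\<bar>\<rceil> \<ge> - h (t 0)" using le_of_int_ceiling[of "\<bar>h (t 0)\<bar>"] by linarith
    have "Ssum h (Suc n) t > real K" using n Ssum_Suc_shift[of h n t] c by simp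
    then show "\<exists>n. Ssum h n t > real K" by blast
  qed
next
  assume A: "t \<in> Wset h"
  show "seq_shift t \<in> Wset h" unfolding Wset_def mem_Collect_eq
  proof
    fix K :: nat
    obtain n where n: "Ssum h n t > real (K + nat \<lceil>\<bar>h (t 0)\<bar>\<rceil>)"
      using A unfolding Wset_def by blast
    have c: "real_of_int \<lceil>\<bar>h (t 0)\<bar>\<rceil> \<ge> h (t 0)" "real_of_int \<lceil>\<bar>h (t 0)\<bar>\<rceil> \<ge> 0"
      using le_of_int_ceiling[of "\<bar>h (t 0)\<bar>"] by linarith+
    have "n \<noteq> 0" using n c by (cases "n = 0") auto
    then obtain m where m: "n = Suc m" by (cases n) auto
    have "Ssum h m (seq_shift t) > real K" using n c m Ssum_Suc_shift[of h m t] by simp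
    then show "\<exists>n. Ssum h n (seq_shift t) > real K" by blast
  qed
qed

lemma Wset_inv: "seq_shift -` Wset h \<inter> space seq_space = Wset h"
  using Wset_shift by auto

locale staterg = statp +
  assumes erg: "ergodic_process M X"
begin

lemma W_null:
  assumes h[measurable]: "h \<in> borel_measurable borel" and hi: "integrable M (\<lambda>\<omega>. h (X 0 \<omega>))"
    and neg: "(\<integral>\<omega>. h (X 0 \<omega>) \<partial>M) < 0"
  shows "prob {\<omega> \<in> space M. (\<lambda>i. X i \<omega>) \<in> Wset h} = 0"
proof -
  have Wm[measurable]: "Wset h \<in> sets seq_space" by (rule Wset_meas[OF h])
  have eq: "measure (seq_law M X) (Wset h) = prob {\<omega> \<in> space M. (\<lambda>i. X i \<omega>) \<in> Wset h}"
    unfolding seq_law_def by (subst measure_distr) (auto intro: arg_cong[where f="measure M"])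
  have "measure (seq_law M X) (Wset h) = 0 \<or> measure (seq_law M X) (Wset h) = 1"
    using erg Wm Wset_inv[of h] unfolding ergodic_process_def by blast
  moreover have "prob {\<omega> \<in> space M. (\<lambda>i. X i \<omega>) \<in> Wset h} \<noteq> 1"
  proof
    assume "prob {\<omega> \<in> space M. (\<lambda>i. X i \<omega>) \<in> Wset h} = 1"
    then have AEW: "AE \<omega> in M. (\<lambda>i. X i \<omega>) \<in> Wset h"
      using AE_in_set_eq_1[of "{\<omega> \<in> space M. (\<lambda>i. X i \<omega>) \<in> Wset h}"] by (simp add: AE_iff_measurable)
    have mMN[measurable]: "(\<lambda>\<omega>. MN h N (\<lambda>i. X i \<omega>)) \<in> borel_measurable M" for N
      using measurable_compose[OF seqX0_meas MN_meas[OF h, of N]] by simp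
    have lim: "(\<lambda>N. \<integral>\<omega>. (if MN h N (\<lambda>i. X i \<omega>) > 0 then h (X 0 \<omega>) else 0) \<partial>M) \<longlonglongrightarrow> (\<integral>\<omega>. h (X 0 \<omega>) \<partial>M)"
    proof (rule integral_dominated_convergence[where w="\<lambda>\<omega>. \<bar>h (X 0 \<omega>)\<bar>"])
      show "integrable M (\<lambda>\<omega>. \<bar>h (X 0 \<omega>)\<bar>)" using hi by simp
      show "AE \<omega> in M. (\<lambda>N. if MN h N (\<lambda>i. X i \<omega>) > 0 then h (X 0 \<omega>) else 0) \<longlonglongrightarrow> h (X 0 \<omega>)"
        using AEW
      proof eventually_elim
        case (elim \<omega>)
        then obtain n where n: "Ssum h n (\<lambda>i. X i \<omega>) > real (0::nat)" unfolding Wset_def by blast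
        have "\<forall>\<^sub>F N in sequentially. (if MN h N (\<lambda>i. X i \<omega>) > 0 then h (X 0 \<omega>) else 0) = h (X 0 \<omega>)"
          unfolding eventually_sequentially
        proof (intro exI[of _ n] allI impI)
          fix N assume "n \<le> N"
          then have "MN h N (\<lambda>i. X i \<omega>) > 0" using MN_ge[of n N h "\<lambda>i. X i \<omega>"] n by simp
          then show "(if MN h N (\<lambda>i. X i \<omega>) > 0 then h (X 0 \<omega>) else 0) = h (X 0 \<omega>)" by simp
        qed
        then show ?case by (rule tendsto_eventually)
      qed
      show "AE \<omega> in M. norm (if MN h N (\<lambda>i. X i \<omega>) > 0 then h (X 0 \<omega>) else 0) \<le> \<bar>h (X 0 \<omega>)\<bar>" for N
        by (rule AE_I2) simp
    qed auto
    have "0 \<le> (\<integral>\<omega>. h (X 0 \<omega>) \<partial>M)"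
      by (rule LIMSEQ_le_const[OF lim]) (use maximal[OF h hi] in blast)
    then show False using neg by simp
  qed
  ultimately show ?thesis using eq by simp
qed

end

context staterg
begin

lemma ae_upper:
  assumes g[measurable]: "g \<in> borel_measurable borel" and gi: "integrable M (\<lambda>\<omega>. g (X 0 \<omega>))"
    and e: "e > 0"
  shows "AE \<omega> in M. \<forall>\<^sub>F n in sequentially. (\<Sum>i<n. g (X i \<omega>)) / real n \<le> (\<integral>\<omega>. g (X 0 \<omega>) \<partial>M) + e"
proof -
  define m where "m = (\<integral>\<omega>. g (X 0 \<omega>) \<partial>M)"
  define c where "c = m + e / 2"
  define h where "h = (\<lambda>x. g x - c)"
  have h[measurable]: "h \<in> borel_measurable borel" unfolding h_def by measurable
  have hi: "integrable M (\<lambda>\<omega>. h (X 0 \<omega>))" unfolding h_def using gi by simp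
  have "(\<integral>\<omega>. h (X 0 \<omega>) \<partial>M) = m - c" unfolding h_def m_def using gi by (simp add: prob_space)
  then have neg: "(\<integral>\<omega>. h (X 0 \<omega>) \<partial>M) < 0" using e by (simp add: c_def)
  have Wm[measurable]: "Wset h \<in> sets seq_space" by (rule Wset_meas[OF h])
  have "prob {\<omega> \<in> space M. (\<lambda>i. X i \<omega>) \<in> Wset h} = 0" by (rule W_null[OF h hi neg])
  then have A1: "AE \<omega> in M. \<omega> \<notin> {\<omega> \<in> space M. (\<lambda>i. X i \<omega>) \<in> Wset h}"
    by (subst (asm) prob_eq_0) auto
  have "AE \<omega> in M. (\<lambda>i. X i \<omega>) \<notin> Wset h" using A1 AE_space by eventually_elim auto
  then show ?thesis
  proof eventually_elim
    case (elim \<omega>)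
    then have "(\<lambda>i. X i \<omega>) \<notin> Wset h" by auto
    then obtain K :: nat where K: "\<And>n. Ssum h n (\<lambda>i. X i \<omega>) \<le> real K"
      unfolding Wset_def by (auto simp: not_less)
    show ?case unfolding eventually_sequentially
    proof (intro exI[of _ "nat \<lceil>2 * real K / e\<rceil> + 1"] allI impI)
      fix n assume n: "nat \<lceil>2 * real K / e\<rceil> + 1 \<le> n"
      then have npos: "real n > 0" by simp
      have "real n \<ge> 2 * real K / e" using n by linarith
      then have nK: "real K \<le> real n * e / 2" using e by (simp add: field_simps)
      have "Ssum h n (\<lambda>i. X i \<omega>) = (\<Sum>i<n. g (X i \<omega>)) - real n * c"
        unfolding Ssum_def h_def by (simp add: sum_subtractf)
      then have "(\<Sum>i<n. g (X i \<omega>)) \<le> real K + real n * c" using K[of n] by simp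
      also have "\<dots> \<le> real n * (m + e)" using nK by (simp add: c_def algebra_simps)
      finally show "(\<Sum>i<n. g (X i \<omega>)) / real n \<le> (\<integral>\<omega>. g (X 0 \<omega>) \<partial>M) + e"
        using npos by (simp add: pos_divide_le_eq m_def mult.commute)
    qed
  qed
qed

lemma ae_abs:
  assumes g[measurable]: "g \<in> borel_measurable borel" and gi: "integrable M (\<lambda>\<omega>. g (X 0 \<omega>))"
    and e: "e > 0"
  shows "AE \<omega> in M. \<forall>\<^sub>F n in sequentially. \<bar>(\<Sum>i<n. g (X i \<omega>)) / real n - (\<integral>\<omega>. g (X 0 \<omega>) \<partial>M)\<bar> \<le> e"
proof -
  have g2: "(\<lambda>x. - g x) \<in> borel_measurable borel" by measurable
  have gi2: "integrable M (\<lambda>\<omega>. - g (X 0 \<omega>))" using gi by simp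
  have A: "AE \<omega> in M. \<forall>\<^sub>F n in sequentially. (\<Sum>i<n. g (X i \<omega>)) / real n \<le> (\<integral>\<omega>. g (X 0 \<omega>) \<partial>M) + e"
    by (rule ae_upper[OF g gi e])
  have B: "AE \<omega> in M. \<forall>\<^sub>F n in sequentially. (\<Sum>i<n. - g (X i \<omega>)) / real n \<le> (\<integral>\<omega>. - g (X 0 \<omega>) \<partial>M) + e"
    by (rule ae_upper[OF g2 gi2 e])
  from A B show ?thesis
  proof eventually_elim
    case (elim \<omega>)
    from elim(1) elim(2) show ?case
    proof eventually_elim
      case (elim n)
      then show ?case by (simp add: sum_negf abs_le_iff)
    qed
  qed
qed

lemma conv_P0:
  assumes g[measurable]: "g \<in> borel_measurable borel" and gi: "integrable M (\<lambda>\<omega>. g (X 0 \<omega>))"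
    and e: "e > 0"
  shows "(\<lambda>n. prob {\<omega> \<in> space M. \<bar>(\<Sum>i<n. g (X i \<omega>)) / real n - (\<integral>\<omega>. g (X 0 \<omega>) \<partial>M)\<bar> > e}) \<longlonglongrightarrow> 0"
proof -
  define m where "m = (\<integral>\<omega>. g (X 0 \<omega>) \<partial>M)"
  define Z where "Z = (\<lambda>n \<omega>. \<bar>(\<Sum>i<n. g (X i \<omega>)) / real n - m\<bar>)"
  have Zm[measurable]: "Z n \<in> borel_measurable M" for n unfolding Z_def by measurable
  define B where "B = (\<lambda>n. {\<omega> \<in> space M. \<exists>k\<ge>n. Z k \<omega> > e})"
  have Bs: "range B \<subseteq> sets M" unfolding B_def by auto
  have Bd: "decseq B" unfolding B_def decseq_def apply auto using le_trans by blast
  have lim: "(\<lambda>n. prob (B n)) \<longlonglongrightarrow> prob (\<Inter>i. B i)" by (rule finite_Lim_measure_decseq[OF Bs Bd])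
  have AEZ: "AE \<omega> in M. \<forall>\<^sub>F n in sequentially. Z n \<omega> \<le> e"
    using ae_abs[OF g gi e] unfolding Z_def m_def .
  have "AE \<omega> in M. \<omega> \<notin> (\<Inter>i. B i)"
    using AEZ
  proof eventually_elim
    case (elim \<omega>)
    then obtain N where "\<And>n. n \<ge> N \<Longrightarrow> Z n \<omega> \<le> e" unfolding eventually_sequentially by blast
    then have "\<omega> \<notin> B N" unfolding B_def by (auto simp: not_less)
    then show ?case by blast
  qed
  then have "prob (\<Inter>i. B i) = 0" using Bs by (subst prob_eq_0) auto
  then have lim0: "(\<lambda>n. prob (B n)) \<longlonglongrightarrow> 0" using lim by simp
  have le: "prob {\<omega> \<in> space M. \<bar>(\<Sum>i<n. g (X i \<omega>)) / real n - m\<bar> > e} \<le> prob (B n)" for n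
    using Bs by (intro finite_measure_mono) (auto simp: B_def Z_def)
  show ?thesis unfolding m_def[symmetric]
    by (rule tendsto_sandwich[OF _ _ tendsto_const lim0]) (auto intro!: always_eventually le)
qed

end

lemma ergodic_conv_P:
  assumes P: "prob_space M" and meas: "\<And>i. X i \<in> borel_measurable M"
    and stat: "stationary_process M X" and erg: "ergodic_process M X"
    and g[measurable]: "g \<in> borel_measurable borel" and gi: "integrable M (\<lambda>\<omega>. g (X 0 \<omega>))"
    and e: "e > 0"
  shows "(\<lambda>n. measure M {\<omega> \<in> space M. \<bar>(\<Sum>i=1..n. g (X i \<omega>)) / real n - (\<integral>\<omega>. g (X 0 \<omega>) \<partial>M)\<bar> > e}) \<longlonglongrightarrow> 0"
proof -
  interpret S: statp M X using P meas stat by (simp add: statp_def statp_axioms_def)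
  define Y where "Y = (\<lambda>i. X (Suc i))"
  have dY: "distr M seq_space (\<lambda>\<omega> i. Y (i + k) \<omega>) = distr M seq_space (\<lambda>\<omega> i. X i \<omega>)" for k
    using S.stat_eq[of "Suc k"] by (simp add: Y_def)
  have statY: "stationary_process M Y" unfolding stationary_process_def using dY[of 0] dY by simp
  have lawY: "seq_law M Y = seq_law M X" unfolding seq_law_def using dY[of 0] by simp
  have ergY: "ergodic_process M Y" using erg unfolding ergodic_process_def lawY .
  interpret T: staterg M Y
    using P meas statY ergY by (simp add: staterg_def staterg_axioms_def statp_def statp_axioms_def Y_def)
  have giY: "integrable M (\<lambda>\<omega>. g (Y 0 \<omega>))" using S.Xi_integrable[OF g, of 1] gi by (simp add: Y_def)
  have intY: "(\<integral>\<omega>. g (Y 0 \<omega>) \<partial>M) = (\<integral>\<omega>. g (X 0 \<omega>) \<partial>M)" using S.Xi_integral[OF g, of 1] by (simp add: Y_def)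
  have sumY: "(\<Sum>i<n. g (Y i \<omega>)) = (\<Sum>i=1..n. g (X i \<omega>))" for n \<omega>
    by (simp add: Y_def sum.atLeast1_atMost_eq)
  show ?thesis using T.conv_P0[OF g giY e] by (simp add: intY sumY)
qed

definition convP :: "'a measure \<Rightarrow> (nat \<Rightarrow> 'a \<Rightarrow> real) \<Rightarrow> bool" where
  "convP M Z \<longleftrightarrow> (\<forall>e>0. (\<lambda>n. measure M {\<omega> \<in> space M. \<bar>Z n \<omega>\<bar> > e}) \<longlonglongrightarrow> 0)"

definition tightP :: "'a measure \<Rightarrow> (nat \<Rightarrow> 'a \<Rightarrow> real) \<Rightarrow> bool" where
  "tightP M U \<longleftrightarrow> (\<forall>d>0. \<exists>K>0. \<forall>n. measure M {\<omega> \<in> space M. \<bar>U n \<omega>\<bar> > K} \<le> d)"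

lemma abs_add_half: "\<bar>a + b\<bar> > (e::real) \<Longrightarrow> \<bar>a\<bar> > e/2 \<or> \<bar>b\<bar> > e/2"
proof (rule ccontr)
  assume "\<bar>a + b\<bar> > e" "\<not> (\<bar>a\<bar> > e/2 \<or> \<bar>b\<bar> > e/2)"
  moreover have "\<bar>a + b\<bar> \<le> \<bar>a\<bar> + \<bar>b\<bar>" by (rule abs_triangle_ineq)
  ultimately show False by linarith
qed

context prob_space
begin

lemma convP_mono:
  assumes Zm: "\<And>n. Z n \<in> borel_measurable M"
    and le: "\<forall>\<^sub>F n in sequentially. \<forall>\<omega>\<in>space M. \<bar>W n \<omega>\<bar> \<le> \<bar>Z n \<omega>\<bar>"
    and c: "convP M Z"
  shows "convP M W"
  unfolding convP_def
proof (intro allI impI)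
  fix e :: real assume e: "e > 0"
  have lim: "(\<lambda>n. prob {\<omega> \<in> space M. \<bar>Z n \<omega>\<bar> > e}) \<longlonglongrightarrow> 0" using c e unfolding convP_def by blast
  have "\<forall>\<^sub>F n in sequentially. prob {\<omega> \<in> space M. \<bar>W n \<omega>\<bar> > e} \<le> prob {\<omega> \<in> space M. \<bar>Z n \<omega>\<bar> > e}"
    using le
  proof eventually_elim
    case (elim n)
    have s: "{\<omega> \<in> space M. \<bar>Z n \<omega>\<bar> > e} \<in> sets M" using Zm[of n] by measurable
    show ?case using elim by (intro finite_measure_mono[OF _ s]) force
  qed
  then show "(\<lambda>n. prob {\<omega> \<in> space M. \<bar>W n \<omega>\<bar> > e}) \<longlonglongrightarrow> 0"
    by (intro tendsto_sandwich[OF _ _ tendsto_const lim]) auto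
qed

lemma convP_add:
  assumes Zm: "\<And>n. Z n \<in> borel_measurable M" and Ym: "\<And>n. Y n \<in> borel_measurable M"
    and cZ: "convP M Z" and cY: "convP M Y"
  shows "convP M (\<lambda>n \<omega>. Z n \<omega> + Y n \<omega>)"
  unfolding convP_def
proof (intro allI impI)
  fix e :: real assume e: "e > 0"
  have e2: "e/2 > 0" using e by simp
  have l1: "(\<lambda>n. prob {\<omega> \<in> space M. \<bar>Z n \<omega>\<bar> > e/2}) \<longlonglongrightarrow> 0" using cZ e2 unfolding convP_def by blast
  have l2: "(\<lambda>n. prob {\<omega> \<in> space M. \<bar>Y n \<omega>\<bar> > e/2}) \<longlonglongrightarrow> 0" using cY e2 unfolding convP_def by blast
  have le: "prob {\<omega> \<in> space M. \<bar>Z n \<omega> + Y n \<omega>\<bar> > e}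
      \<le> prob {\<omega> \<in> space M. \<bar>Z n \<omega>\<bar> > e/2} + prob {\<omega> \<in> space M. \<bar>Y n \<omega>\<bar> > e/2}" for n
  proof -
    have s1: "{\<omega> \<in> space M. \<bar>Z n \<omega>\<bar> > e/2} \<in> sets M" using Zm[of n] by measurable
    have s2: "{\<omega> \<in> space M. \<bar>Y n \<omega>\<bar> > e/2} \<in> sets M" using Ym[of n] by measurable
    have "prob {\<omega> \<in> space M. \<bar>Z n \<omega> + Y n \<omega>\<bar> > e}
        \<le> prob ({\<omega> \<in> space M. \<bar>Z n \<omega>\<bar> > e/2} \<union> {\<omega> \<in> space M. \<bar>Y n \<omega>\<bar> > e/2})"
      using s1 s2 by (intro finite_measure_mono) (blast dest: abs_add_half, blast)
    also have "\<dots> \<le> prob {\<omega> \<in> space M. \<bar>Z n \<omega>\<bar> > e/2} + prob {\<omega> \<in> space M. \<bar>Y n \<omega>\<bar> > e/2}"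
      using s1 s2 by (rule measure_Un_le)
    finally show ?thesis .
  qed
  show "(\<lambda>n. prob {\<omega> \<in> space M. \<bar>Z n \<omega> + Y n \<omega>\<bar> > e}) \<longlonglongrightarrow> 0"
  proof (rule tendsto_sandwich[OF _ _ tendsto_const tendsto_add_zero[OF l1 l2]])
    show "\<forall>\<^sub>F n in sequentially. 0 \<le> prob {\<omega> \<in> space M. \<bar>Z n \<omega> + Y n \<omega>\<bar> > e}" by simp
    show "\<forall>\<^sub>F n in sequentially. prob {\<omega> \<in> space M. \<bar>Z n \<omega> + Y n \<omega>\<bar> > e}
      \<le> prob {\<omega> \<in> space M. \<bar>Z n \<omega>\<bar> > e/2} + prob {\<omega> \<in> space M. \<bar>Y n \<omega>\<bar> > e/2}"
      by (rule always_eventually) (use le in blast)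
  qed
qed

lemma convP_mult_tight:
  assumes Um: "\<And>n. U n \<in> borel_measurable M" and Vm: "\<And>n. V n \<in> borel_measurable M"
    and tU: "tightP M U" and cV: "convP M V"
  shows "convP M (\<lambda>n \<omega>. U n \<omega> * V n \<omega>)"
  unfolding convP_def
proof (intro allI impI)
  fix e :: real assume e: "e > 0"
  show "(\<lambda>n. prob {\<omega> \<in> space M. \<bar>U n \<omega> * V n \<omega>\<bar> > e}) \<longlonglongrightarrow> 0"
  proof (rule LIMSEQ_I)
    fix r :: real assume r: "r > 0"
    have r3: "r / 3 > 0" using r by simp
    obtain K where K: "K > 0" "\<And>n. prob {\<omega> \<in> space M. \<bar>U n \<omega>\<bar> > K} \<le> r / 3"
      using tU[unfolded tightP_def, rule_format, OF r3] by blast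
    have eK: "e / K > 0" using e K by simp
    have "(\<lambda>n. prob {\<omega> \<in> space M. \<bar>V n \<omega>\<bar> > e / K}) \<longlonglongrightarrow> 0"
      using cV[unfolded convP_def, rule_format, OF eK] .
    from LIMSEQ_D[OF this r3] obtain N where
      N: "\<And>n. n \<ge> N \<Longrightarrow> norm (prob {\<omega> \<in> space M. \<bar>V n \<omega>\<bar> > e / K} - 0) < r / 3"
      by blast
    show "\<exists>no. \<forall>n\<ge>no. norm (prob {\<omega> \<in> space M. \<bar>U n \<omega> * V n \<omega>\<bar> > e} - 0) < r"
    proof (intro exI[of _ N] allI impI)
      fix n assume n: "n \<ge> N"
      have s1: "{\<omega> \<in> space M. \<bar>U n \<omega>\<bar> > K} \<in> sets M" using Um[of n] by measurable
      have s2: "{\<omega> \<in> space M. \<bar>V n \<omega>\<bar> > e / K} \<in> sets M" using Vm[of n] by measurable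
      have sub: "{\<omega> \<in> space M. \<bar>U n \<omega> * V n \<omega>\<bar> > e} \<subseteq> {\<omega> \<in> space M. \<bar>U n \<omega>\<bar> > K} \<union> {\<omega> \<in> space M. \<bar>V n \<omega>\<bar> > e / K}"
      proof
        fix \<omega> assume A: "\<omega> \<in> {\<omega> \<in> space M. \<bar>U n \<omega> * V n \<omega>\<bar> > e}"
        show "\<omega> \<in> {\<omega> \<in> space M. \<bar>U n \<omega>\<bar> > K} \<union> {\<omega> \<in> space M. \<bar>V n \<omega>\<bar> > e / K}"
        proof (rule ccontr)
          assume "\<omega> \<notin> {\<omega> \<in> space M. \<bar>U n \<omega>\<bar> > K} \<union> {\<omega> \<in> space M. \<bar>V n \<omega>\<bar> > e / K}"
          then have "\<bar>U n \<omega>\<bar> \<le> K" "\<bar>V n \<omega>\<bar> \<le> e / K" using A by auto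
          then have "\<bar>U n \<omega>\<bar> * \<bar>V n \<omega>\<bar> \<le> K * (e / K)" by (intro mult_mono) auto
          also have "K * (e / K) = e" using K(1) by simp
          finally have "\<bar>U n \<omega> * V n \<omega>\<bar> \<le> e" by (simp only: abs_mult)
          then show False using A by simp
        qed
      qed
      have "prob {\<omega> \<in> space M. \<bar>U n \<omega> * V n \<omega>\<bar> > e}
          \<le> prob ({\<omega> \<in> space M. \<bar>U n \<omega>\<bar> > K} \<union> {\<omega> \<in> space M. \<bar>V n \<omega>\<bar> > e / K})"
        using s1 s2 sub by (intro finite_measure_mono) auto
      also have "\<dots> \<le> prob {\<omega> \<in> space M. \<bar>U n \<omega>\<bar> > K} + prob {\<omega> \<in> space M. \<bar>V n \<omega>\<bar> > e / K}"
        using s1 s2 by (rule measure_Un_le)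
      also have "\<dots> < r / 3 + r / 3" using K(2)[of n] N[OF n] by simp
      finally show "norm (prob {\<omega> \<in> space M. \<bar>U n \<omega> * V n \<omega>\<bar> > e} - 0) < r" using r by simp
    qed
  qed
qed

lemma convP_const:
  assumes "c \<longlonglongrightarrow> 0"
  shows "convP M (\<lambda>n \<omega>. c n)"
  unfolding convP_def
proof (intro allI impI)
  fix e :: real assume e: "e > 0"
  have "\<forall>\<^sub>F n in sequentially. \<bar>c n\<bar> < e"
    using order_tendstoD(2)[OF tendsto_rabs_zero[OF assms] e] .
  then have "\<forall>\<^sub>F n in sequentially. prob {\<omega> \<in> space M. \<bar>c n\<bar> > e} = 0"
    by eventually_elim auto
  then show "(\<lambda>n. prob {\<omega> \<in> space M. \<bar>c n\<bar> > e}) \<longlonglongrightarrow> 0"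
    by (rule tendsto_eventually)
qed

lemma convP_pow:
  assumes Zm: "\<And>n. Z n \<in> borel_measurable M" and c: "convP M Z" and v: "v \<ge> 1"
  shows "convP M (\<lambda>n \<omega>. \<bar>Z n \<omega>\<bar> ^ v)"
  unfolding convP_def
proof (intro allI impI)
  fix e :: real assume e: "e > 0"
  have lim: "(\<lambda>n. prob {\<omega> \<in> space M. \<bar>Z n \<omega>\<bar> > min e 1}) \<longlonglongrightarrow> 0" using c e unfolding convP_def by simp
  have le: "prob {\<omega> \<in> space M. \<bar>Z n \<omega>\<bar> ^ v > e} \<le> prob {\<omega> \<in> space M. \<bar>Z n \<omega>\<bar> > min e 1}" for n
  proof -
    have s: "{\<omega> \<in> space M. \<bar>Z n \<omega>\<bar> > min e 1} \<in> sets M" using Zm[of n] by measurable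
    have "\<bar>Z n \<omega>\<bar> > min e 1" if "\<bar>Z n \<omega>\<bar> ^ v > e" for \<omega>
    proof (rule ccontr)
      assume "\<not> \<bar>Z n \<omega>\<bar> > min e 1"
      then have z: "\<bar>Z n \<omega>\<bar> \<le> min e 1" by (simp only: not_less)
      have "\<bar>Z n \<omega>\<bar> ^ v \<le> \<bar>Z n \<omega>\<bar> ^ 1"
        using z v by (intro power_decreasing) auto
      then show False using that z by simp
    qed
    then show ?thesis by (intro finite_measure_mono[OF _ s]) auto
  qed
  have eq: "\<And>x::real. \<bar>\<bar>x\<bar> ^ v\<bar> = \<bar>x\<bar> ^ v" by simp
  show "(\<lambda>n. prob {\<omega> \<in> space M. \<bar>\<bar>Z n \<omega>\<bar> ^ v\<bar> > e}) \<longlonglongrightarrow> 0"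
    unfolding eq
  proof (rule tendsto_sandwich[OF _ _ tendsto_const lim])
    show "\<forall>\<^sub>F n in sequentially. 0 \<le> prob {\<omega> \<in> space M. \<bar>Z n \<omega>\<bar> ^ v > e}" by simp
    show "\<forall>\<^sub>F n in sequentially. prob {\<omega> \<in> space M. \<bar>Z n \<omega>\<bar> ^ v > e} \<le> prob {\<omega> \<in> space M. \<bar>Z n \<omega>\<bar> > min e 1}"
      by (rule always_eventually) (use le in blast)
  qed
qed

lemma tight_Chebyshev:
  assumes Um: "\<And>n. U n \<in> borel_measurable M"
    and Ui: "\<And>n. integrable M (\<lambda>\<omega>. (U n \<omega>)\<^sup>2)"
    and bd: "\<And>n. (\<integral>\<omega>. (U n \<omega>)\<^sup>2 \<partial>M) \<le> C"
  shows "tightP M U"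
  unfolding tightP_def
proof (intro allI impI)
  fix d :: real assume d: "d > 0"
  define K where "K = sqrt ((\<bar>C\<bar> + 1) / d)"
  have Kpos: "K > 0" unfolding K_def using d by simp
  have K2: "K\<^sup>2 = (\<bar>C\<bar> + 1) / d" unfolding K_def using d by simp
  have "prob {\<omega> \<in> space M. \<bar>U n \<omega>\<bar> > K} \<le> d" for n
  proof -
    have s: "{\<omega> \<in> space M. (U n \<omega>)\<^sup>2 \<ge> K\<^sup>2} \<in> sets M" using Um[of n] by measurable
    have "prob {\<omega> \<in> space M. \<bar>U n \<omega>\<bar> > K} \<le> prob {\<omega> \<in> space M. (U n \<omega>)\<^sup>2 \<ge> K\<^sup>2}"
    proof (intro finite_measure_mono[OF _ s] subsetI)
      fix \<omega> assume "\<omega> \<in> {\<omega> \<in> space M. \<bar>U n \<omega>\<bar> > K}"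
      then have "\<omega> \<in> space M" "\<bar>U n \<omega>\<bar> > K" by auto
      then have "K\<^sup>2 \<le> \<bar>U n \<omega>\<bar>\<^sup>2" using Kpos by (intro power_mono) auto
      then show "\<omega> \<in> {\<omega> \<in> space M. (U n \<omega>)\<^sup>2 \<ge> K\<^sup>2}" using \<open>\<omega> \<in> space M\<close> by simp
    qed
    also have "\<dots> \<le> (\<integral>\<omega>. (U n \<omega>)\<^sup>2 \<partial>M) / K\<^sup>2"
      by (rule integral_Markov_inequality_measure[OF Ui s]) (use Kpos in auto)
    also have "\<dots> \<le> C / K\<^sup>2" using bd[of n] Kpos by (simp add: divide_right_mono)
    also have "\<dots> \<le> (\<bar>C\<bar> + 1) / K\<^sup>2" using Kpos by (intro divide_right_mono) auto
    also have "\<dots> = d" unfolding K2 using d by simp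
    finally show ?thesis .
  qed
  then show "\<exists>K>0. \<forall>n. prob {\<omega> \<in> space M. \<bar>U n \<omega>\<bar> > K} \<le> d" using Kpos by blast
qed

end

lemma pt_scalar:
  fixes a D :: real
  shows "\<bar>a ^ v * (\<bar>a - D\<bar> - \<bar>a\<bar>) - D * (a ^ v * sgn (- a))\<bar> \<le> 2 * \<bar>D\<bar> ^ Suc v"
proof (cases "\<bar>a\<bar> > \<bar>D\<bar>")
  case True
  show ?thesis
  proof (cases "a > 0")
    case pos: True
    then have "a - D > 0" using True by linarith
    then have "\<bar>a - D\<bar> - \<bar>a\<bar> = - D" using pos by simp
    then show ?thesis using pos by (simp add: algebra_simps)
  next
    case False
    then have neg: "a < 0" using True by linarith
    then have "a - D < 0" using True by linarith
    then have "\<bar>a - D\<bar> - \<bar>a\<bar> = D" using neg by simp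
    then show ?thesis using neg by (simp add: algebra_simps)
  qed
next
  case False
  then have aD: "\<bar>a\<bar> \<le> \<bar>D\<bar>" by simp
  have pv: "\<bar>a\<bar> ^ v \<le> \<bar>D\<bar> ^ v" using aD by (intro power_mono) auto
  have d1: "\<bar>\<bar>a - D\<bar> - \<bar>a\<bar>\<bar> \<le> \<bar>D\<bar>" by linarith
  have d2: "\<bar>sgn (- a)\<bar> \<le> (1::real)" by (simp add: abs_sgn_eq)
  have "\<bar>a ^ v * (\<bar>a - D\<bar> - \<bar>a\<bar>) - D * (a ^ v * sgn (- a))\<bar>
      \<le> \<bar>a ^ v * (\<bar>a - D\<bar> - \<bar>a\<bar>)\<bar> + \<bar>D * (a ^ v * sgn (- a))\<bar>" by (rule abs_triangle_ineq4)
  also have "\<bar>a ^ v * (\<bar>a - D\<bar> - \<bar>a\<bar>)\<bar> \<le> \<bar>D\<bar> ^ v * \<bar>D\<bar>"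
    unfolding abs_mult power_abs by (intro mult_mono pv d1) auto
  also have "\<bar>D * (a ^ v * sgn (- a))\<bar> \<le> \<bar>D\<bar> * (\<bar>D\<bar> ^ v * 1)"
    unfolding abs_mult power_abs by (intro mult_mono pv d2 mult_left_mono) auto
  finally show ?thesis by (simp add: algebra_simps)
qed

lemma key_pt:
  fixes x :: "nat \<Rightarrow> real" and mu D cc :: real
  assumes n: "n > 0"
  shows "\<bar>sqrt (real n) * ((\<Sum>i=1..n. (x i - mu) ^ v * (\<bar>x i - (D + mu)\<bar> - \<bar>x i - mu\<bar>)) / real n - D * cc)\<bar>
    \<le> \<bar>sqrt (real n) * D\<bar> * \<bar>(\<Sum>i=1..n. (x i - mu) ^ v * sgn (mu - x i)) / real n - cc\<bar>
      + \<bar>sqrt (real n) * D\<bar> * (\<bar>D\<bar> ^ v + \<bar>D\<bar> ^ v)"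
proof -
  define r where "r = (\<lambda>i. (x i - mu) ^ v * (\<bar>x i - (D + mu)\<bar> - \<bar>x i - mu\<bar>) - D * ((x i - mu) ^ v * sgn (mu - x i)))"
  define A where "A = (\<Sum>i=1..n. (x i - mu) ^ v * sgn (mu - x i)) / real n"
  define R where "R = (\<Sum>i=1..n. r i) / real n"
  have rb: "\<bar>r i\<bar> \<le> 2 * \<bar>D\<bar> ^ Suc v" for i
    using pt_scalar[where a="x i - mu" and D=D and v=v] unfolding r_def by (simp add: algebra_simps)
  have "\<bar>\<Sum>i=1..n. r i\<bar> \<le> (\<Sum>i=1..n. \<bar>r i\<bar>)" by (rule sum_abs)
  also have "\<dots> \<le> real (card {1..n}) * (2 * \<bar>D\<bar> ^ Suc v)" by (rule sum_bounded_above) (rule rb)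
  finally have Rb: "\<bar>R\<bar> \<le> 2 * \<bar>D\<bar> ^ Suc v" unfolding R_def using n by (simp add: divide_le_eq mult.commute)
  have S: "(\<Sum>i=1..n. (x i - mu) ^ v * (\<bar>x i - (D + mu)\<bar> - \<bar>x i - mu\<bar>)) = D * (\<Sum>i=1..n. (x i - mu) ^ v * sgn (mu - x i)) + (\<Sum>i=1..n. r i)"
    unfolding r_def sum_distrib_left sum.distrib[symmetric] by simp
  have eq: "(\<Sum>i=1..n. (x i - mu) ^ v * (\<bar>x i - (D + mu)\<bar> - \<bar>x i - mu\<bar>)) / real n - D * cc = D * (A - cc) + R"
    unfolding S A_def R_def using n by (simp add: field_simps)
  have "\<bar>sqrt (real n) * (D * (A - cc) + R)\<bar> \<le> \<bar>sqrt (real n) * D\<bar> * \<bar>A - cc\<bar> + sqrt (real n) * \<bar>R\<bar>"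
    by (simp add: abs_mult distrib_left mult.assoc abs_triangle_ineq[THEN order_trans])
  also have "sqrt (real n) * \<bar>R\<bar> \<le> sqrt (real n) * (2 * \<bar>D\<bar> ^ Suc v)" using Rb by (intro mult_left_mono) auto
  also have "sqrt (real n) * (2 * \<bar>D\<bar> ^ Suc v) = \<bar>sqrt (real n) * D\<bar> * (\<bar>D\<bar> ^ v + \<bar>D\<bar> ^ v)"
    by (simp add: abs_mult)
  finally show ?thesis unfolding eq A_def by simp
qed

lemma row_bound:
  fixes \<gamma> :: "nat \<Rightarrow> real"
  assumes s: "summable \<gamma>" and nn: "\<And>k. \<gamma> k \<ge> 0" and J: "finite J"
  shows "(\<Sum>j\<in>J. \<gamma> (if i \<le> j then j - i else i - j)) \<le> 2 * suminf \<gamma>"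
proof -
  have le: "sum (\<gamma> \<circ> \<phi>) B \<le> suminf \<gamma>" if "inj_on \<phi> B" "finite B" for \<phi> :: "nat \<Rightarrow> nat" and B
  proof -
    have "sum (\<gamma> \<circ> \<phi>) B = sum \<gamma> (\<phi> ` B)" using that by (simp add: sum.reindex)
    also have "\<dots> \<le> suminf \<gamma>" using that s nn by (intro sum_le_suminf) auto
    finally show ?thesis .
  qed
  have "(\<Sum>j\<in>J. \<gamma> (if i \<le> j then j - i else i - j)) = (\<Sum>j\<in>J. if i \<le> j then \<gamma> (j - i) else \<gamma> (i - j))"
    by (intro sum.cong) auto
  also have "\<dots> = sum (\<gamma> \<circ> (\<lambda>j. j - i)) (J \<inter> {j. i \<le> j}) + sum (\<gamma> \<circ> (\<lambda>j. i - j)) (J \<inter> - {j. i \<le> j})"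
    using J by (simp add: sum.If_cases o_def)
  also have "\<dots> \<le> suminf \<gamma> + suminf \<gamma>"
    using J by (intro add_mono le) (auto simp: inj_on_def)
  finally show ?thesis by simp
qed

lemma abs_mult_le_sq: "\<bar>(x::real) * y\<bar> \<le> x\<^sup>2 + y\<^sup>2"
proof -
  have "0 \<le> (\<bar>x\<bar> - \<bar>y\<bar>)\<^sup>2" by simp
  then have "2 * (\<bar>x\<bar> * \<bar>y\<bar>) \<le> \<bar>x\<bar>\<^sup>2 + \<bar>y\<bar>\<^sup>2" by (simp add: power2_diff)
  moreover have "0 \<le> \<bar>x\<bar> * \<bar>y\<bar>" by simp
  ultimately show ?thesis by (simp only: abs_mult power2_abs)
qed

context statp
begin

lemma sample_mean_meas[measurable]: "(\<lambda>\<omega>. sample_mean X n \<omega>) \<in> borel_measurable M"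
  unfolding sample_mean_def by measurable

lemma second_moment:
  assumes X0sq: "integrable M (\<lambda>\<omega>. (X 0 \<omega>)\<^sup>2)"
    and X0i: "integrable M (X 0)"
    and sc: "summable (\<lambda>i. \<bar>covariance M (X 0) (X i)\<bar>)"
  shows "integrable M (\<lambda>\<omega>. (sqrt (real n) * (sample_mean X n \<omega> - (\<integral>x. X 0 x \<partial>M)))\<^sup>2)"
    and "(\<integral>\<omega>. (sqrt (real n) * (sample_mean X n \<omega> - (\<integral>x. X 0 x \<partial>M)))\<^sup>2 \<partial>M)
           \<le> 2 * (\<Sum>i. \<bar>covariance M (X 0) (X i)\<bar>)"
proof -
  define \<mu> where "\<mu> = (\<integral>x. X 0 x \<partial>M)"
  define \<gamma> where "\<gamma> = (\<lambda>i. \<bar>covariance M (X 0) (X i)\<bar>)"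
  define a where "a = (\<lambda>i \<omega>. X i \<omega> - \<mu>)"
  have s\<gamma>: "summable \<gamma>" using sc unfolding \<gamma>_def .
  have \<gamma>nn: "\<gamma> k \<ge> 0" for k unfolding \<gamma>_def by simp
  have Sg: "suminf \<gamma> \<ge> 0" using s\<gamma> \<gamma>nn by (simp add: suminf_nonneg)
  have Xsq: "integrable M (\<lambda>\<omega>. (X i \<omega>)\<^sup>2)" for i
    using Xi_integrable[of "\<lambda>x. x\<^sup>2" i] X0sq by simp
  have Xint: "integrable M (\<lambda>\<omega>. X i \<omega>)" for i
    using Xi_integrable[of "\<lambda>x. x" i] X0i by simp
  have EX: "(\<integral>\<omega>. X i \<omega> \<partial>M) = \<mu>" for i
    using Xi_integral[of "\<lambda>x. x" i] unfolding \<mu>_def by simp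
  have asq: "integrable M (\<lambda>\<omega>. (a i \<omega>)\<^sup>2)" for i
  proof -
    have "integrable M (\<lambda>\<omega>. (X i \<omega>)\<^sup>2 - 2 * \<mu> * X i \<omega> + \<mu>\<^sup>2)"
      using Xsq[of i] Xint[of i] by simp
    moreover have eq: "(\<lambda>\<omega>. (a i \<omega>)\<^sup>2) = (\<lambda>\<omega>. (X i \<omega>)\<^sup>2 - 2 * \<mu> * X i \<omega> + \<mu>\<^sup>2)"
      by (simp add: a_def power2_diff fun_eq_iff algebra_simps)
    ultimately show ?thesis by (simp only: eq)
  qed
  have am[measurable]: "a i \<in> borel_measurable M" for i unfolding a_def by simp
  have aint: "integrable M (\<lambda>\<omega>. a i \<omega> * a j \<omega>)" for i j
  proof (rule Bochner_Integration.integrable_bound)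
    show "integrable M (\<lambda>\<omega>. (a i \<omega>)\<^sup>2 + (a j \<omega>)\<^sup>2)" using asq by simp
    show "AE \<omega> in M. norm (a i \<omega> * a j \<omega>) \<le> norm ((a i \<omega>)\<^sup>2 + (a j \<omega>)\<^sup>2)"
      using abs_mult_le_sq by (intro AE_I2) simp
  qed simp
  have cov: "(\<integral>\<omega>. a i \<omega> * a j \<omega> \<partial>M) = covariance M (X 0) (X (j - i))" if ij: "i \<le> j" for i j
  proof -
    have m: "(\<lambda>t. (t 0 - \<mu>) * (t (j - i) - \<mu>)) \<in> borel_measurable seq_space" by measurable
    have "(\<integral>\<omega>. (X (0 + i) \<omega> - \<mu>) * (X (j - i + i) \<omega> - \<mu>) \<partial>M) = (\<integral>\<omega>. (X 0 \<omega> - \<mu>) * (X (j - i) \<omega> - \<mu>) \<partial>M)"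
      using stat_integral[OF m, of i] by simp
    then show ?thesis using ij unfolding a_def covariance_def EX \<mu>_def[symmetric] by simp
  qed
  have covb: "\<bar>\<integral>\<omega>. a i \<omega> * a j \<omega> \<partial>M\<bar> \<le> \<gamma> (if i \<le> j then j - i else i - j)" for i j
  proof (cases "i \<le> j")
    case True then show ?thesis using cov[OF True] unfolding \<gamma>_def by simp
  next
    case False
    then have "(\<integral>\<omega>. a i \<omega> * a j \<omega> \<partial>M) = (\<integral>\<omega>. a j \<omega> * a i \<omega> \<partial>M)" by (simp add: mult.commute)
    then show ?thesis using cov[of j i] False unfolding \<gamma>_def by simp
  qed
  define Q where "Q = (\<lambda>\<omega>. (sqrt (real n) * (sample_mean X n \<omega> - \<mu>))\<^sup>2)"
  have "integrable M Q \<and> (\<integral>\<omega>. Q \<omega> \<partial>M) \<le> 2 * suminf \<gamma>"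
  proof (cases "n = 0")
    case True
    then have "Q = (\<lambda>\<omega>. 0)" unfolding Q_def by (simp add: fun_eq_iff)
    then show ?thesis using Sg by simp
  next
    case False
    then have npos: "real n > 0" by simp
    have Qeq: "Q \<omega> = (1 / real n) * (\<Sum>i\<in>{1..n}. \<Sum>j\<in>{1..n}. a i \<omega> * a j \<omega>)" for \<omega>
    proof -
      have "sample_mean X n \<omega> - \<mu> = (\<Sum>i\<in>{1..n}. a i \<omega>) / real n"
        unfolding sample_mean_def a_def using npos by (simp add: sum_subtractf field_simps)
      then have "Q \<omega> = real n * ((\<Sum>i\<in>{1..n}. a i \<omega>) / real n)\<^sup>2"
        unfolding Q_def using npos by (simp add: power_mult_distrib power_divide)
      also have "\<dots> = (1 / real n) * ((\<Sum>i\<in>{1..n}. a i \<omega>) * (\<Sum>i\<in>{1..n}. a i \<omega>))"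
        using npos by (simp add: power2_eq_square field_simps)
      also have "\<dots> = (1 / real n) * (\<Sum>i\<in>{1..n}. \<Sum>j\<in>{1..n}. a i \<omega> * a j \<omega>)"
        by (simp add: sum_product)
      finally show ?thesis .
    qed
    have iQ: "integrable M (\<lambda>\<omega>. (1 / real n) * (\<Sum>i\<in>{1..n}. \<Sum>j\<in>{1..n}. a i \<omega> * a j \<omega>))"
      using aint by simp
    have "(\<integral>\<omega>. Q \<omega> \<partial>M) = (1 / real n) * (\<Sum>i\<in>{1..n}. \<Sum>j\<in>{1..n}. (\<integral>\<omega>. a i \<omega> * a j \<omega> \<partial>M))"
      unfolding Qeq using aint by (simp add: Bochner_Integration.integral_sum integrable_sum)
    also have "\<dots> \<le> (1 / real n) * (\<Sum>i\<in>{1..n}. 2 * suminf \<gamma>)"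
    proof (intro mult_left_mono sum_mono)
      fix i assume "i \<in> {1..n}"
      have "(\<Sum>j\<in>{1..n}. (\<integral>\<omega>. a i \<omega> * a j \<omega> \<partial>M)) \<le> (\<Sum>j\<in>{1..n}. \<gamma> (if i \<le> j then j - i else i - j))"
        by (intro sum_mono order_trans[OF abs_ge_self covb])
      also have "\<dots> \<le> 2 * suminf \<gamma>" by (rule row_bound[OF s\<gamma> \<gamma>nn]) simp
      finally show "(\<Sum>j\<in>{1..n}. (\<integral>\<omega>. a i \<omega> * a j \<omega> \<partial>M)) \<le> 2 * suminf \<gamma>" .
    qed simp
    also have "\<dots> = 2 * suminf \<gamma>" using npos by simp
    finally have le: "(\<integral>\<omega>. Q \<omega> \<partial>M) \<le> 2 * suminf \<gamma>" .
    have Qfun: "Q = (\<lambda>\<omega>. (1 / real n) * (\<Sum>i\<in>{1..n}. \<Sum>j\<in>{1..n}. a i \<omega> * a j \<omega>))"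
      by (rule ext) (rule Qeq)
    have "integrable M Q" unfolding Qfun by (rule iQ)
    then show ?thesis using le by simp
  qed
  then show "integrable M (\<lambda>\<omega>. (sqrt (real n) * (sample_mean X n \<omega> - (\<integral>x. X 0 x \<partial>M)))\<^sup>2)"
    and "(\<integral>\<omega>. (sqrt (real n) * (sample_mean X n \<omega> - (\<integral>x. X 0 x \<partial>M)))\<^sup>2 \<partial>M)
           \<le> 2 * (\<Sum>i. \<bar>covariance M (X 0) (X i)\<bar>)"
    unfolding Q_def \<mu>_def \<gamma>_def by auto
qed

end

lemma sq_le_pow: assumes "2 \<le> v" shows "(x::real)\<^sup>2 \<le> 1 + \<bar>x\<bar> ^ v"
proof (cases "\<bar>x\<bar> \<le> 1")
  case True
  then have "\<bar>x\<bar>\<^sup>2 \<le> 1" by (intro power_le_one) auto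
  then have "x\<^sup>2 \<le> 1" by simp
  moreover have "0 \<le> \<bar>x\<bar> ^ v" by simp
  ultimately show ?thesis by linarith
next
  case False
  then have "\<bar>x\<bar> ^ 2 \<le> \<bar>x\<bar> ^ v" using assms by (intro power_increasing) auto
  then show ?thesis by simp
qed

lemma pow_le_sq: assumes "v \<le> 2" shows "\<bar>x::real\<bar> ^ v \<le> 1 + x\<^sup>2"
proof (cases "\<bar>x\<bar> \<le> 1")
  case True
  then have "\<bar>x\<bar> ^ v \<le> 1" by (intro power_le_one) auto
  then show ?thesis by (smt (verit) zero_le_power2)
next
  case False
  then have "\<bar>x\<bar> ^ v \<le> \<bar>x\<bar> ^ 2" using assms by (intro power_increasing) auto
  then show ?thesis by simp
qed

lemma diff_pow_le: "\<bar>(a::real) - b\<bar> ^ v \<le> 2 ^ v * (\<bar>a\<bar> ^ v + \<bar>b\<bar> ^ v)"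
proof (cases "\<bar>a\<bar> \<le> \<bar>b\<bar>")
  case True
  then have "\<bar>a - b\<bar> \<le> 2 * \<bar>b\<bar>" by linarith
  then have "\<bar>a - b\<bar> ^ v \<le> (2 * \<bar>b\<bar>) ^ v" by (intro power_mono) auto
  also have "\<dots> = 2 ^ v * \<bar>b\<bar> ^ v" by (simp add: power_mult_distrib)
  also have "\<dots> \<le> 2 ^ v * (\<bar>a\<bar> ^ v + \<bar>b\<bar> ^ v)" by (intro mult_left_mono) auto
  finally show ?thesis .
next
  case False
  then have "\<bar>a - b\<bar> \<le> 2 * \<bar>a\<bar>" by linarith
  then have "\<bar>a - b\<bar> ^ v \<le> (2 * \<bar>a\<bar>) ^ v" by (intro power_mono) auto
  also have "\<dots> = 2 ^ v * \<bar>a\<bar> ^ v" by (simp add: power_mult_distrib)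
  also have "\<dots> \<le> 2 ^ v * (\<bar>a\<bar> ^ v + \<bar>b\<bar> ^ v)" by (intro mult_left_mono) auto
  finally show ?thesis .
qed

lemma small_o_P_convP: "small_o_P M Y a \<longleftrightarrow> convP M (\<lambda>n \<omega>. Y n \<omega> / a n)"
  by (simp add: small_o_P_def convP_def)

lemma inv_sqrt_lim: "(\<lambda>n. 1 / sqrt (real n)) \<longlonglongrightarrow> 0"
proof -
  have "(\<lambda>n. sqrt (inverse (real n))) \<longlonglongrightarrow> sqrt 0"
    by (intro tendsto_real_sqrt lim_inverse_n)
  moreover have "(\<lambda>n. 1 / sqrt (real n)) = (\<lambda>n. sqrt (inverse (real n)))"
    unfolding real_sqrt_inverse by (simp add: fun_eq_iff divide_inverse)
  ultimately show ?thesis by simp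
qed

theorem lemma4:
  fixes M :: "'a measure" and X :: "nat \<Rightarrow> 'a \<Rightarrow> real" and v :: nat
  assumes "prob_space M"
    and "\<And>i. X i \<in> borel_measurable M"
    and "stationary_process M X"
    and "ergodic_process M X"
    and "v \<ge> 1"
    and "v \<le> 2 \<Longrightarrow> integrable M (\<lambda>\<omega>. (X 0 \<omega>)\<^sup>2)"
    and "v > 2 \<Longrightarrow> integrable M (\<lambda>\<omega>. \<bar>X 0 \<omega>\<bar> ^ v)"
    and "summable (\<lambda>i. \<bar>covariance M (X 0) (X i)\<bar>)"
  shows "small_o_P M
     (\<lambda>n \<omega>. (\<Sum>i=1..n. (X i \<omega> - (\<integral>x. X 0 x \<partial>M)) ^ v *
                 (\<bar>X i \<omega> - sample_mean X n \<omega>\<bar> - \<bar>X i \<omega> - (\<integral>x. X 0 x \<partial>M)\<bar>)) / real n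
             - (sample_mean X n \<omega> - (\<integral>x. X 0 x \<partial>M)) *
                 (\<integral>x. (X 0 x - (\<integral>y. X 0 y \<partial>M)) ^ v * sgn ((\<integral>y. X 0 y \<partial>M) - X 0 x) \<partial>M))
     (\<lambda>n. 1 / sqrt (real n))"
proof -
  interpret S: statp M X using assms(1,2,3) by (simp add: statp_def statp_axioms_def)
  have meas[measurable]: "X i \<in> borel_measurable M" for i by (rule assms(2))
  define \<mu> where "\<mu> = (\<integral>x. X 0 x \<partial>M)"
  have X0sq: "integrable M (\<lambda>\<omega>. (X 0 \<omega>)\<^sup>2)"
  proof (cases "v \<le> 2")
    case True then show ?thesis using assms(6) by simp
  next
    case False
    then have iv: "integrable M (\<lambda>\<omega>. \<bar>X 0 \<omega>\<bar> ^ v)" using assms(7) by simp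
    show ?thesis
    proof (rule Bochner_Integration.integrable_bound)
      show "integrable M (\<lambda>\<omega>. 1 + \<bar>X 0 \<omega>\<bar> ^ v)" using iv by simp
      show "AE \<omega> in M. norm ((X 0 \<omega>)\<^sup>2) \<le> norm (1 + \<bar>X 0 \<omega>\<bar> ^ v)"
        using sq_le_pow[of v] False by (intro AE_I2) simp
    qed simp
  qed
  have X0i: "integrable M (X 0)"
  proof (rule Bochner_Integration.integrable_bound)
    show "integrable M (\<lambda>\<omega>. 1 + (X 0 \<omega>)\<^sup>2)" using X0sq by simp
    show "AE \<omega> in M. norm (X 0 \<omega>) \<le> norm (1 + (X 0 \<omega>)\<^sup>2)"
      using pow_le_sq[of 1] by (intro AE_I2) (simp add: add_nonneg_nonneg)
  qed simp
  have X0v: "integrable M (\<lambda>\<omega>. \<bar>X 0 \<omega>\<bar> ^ v)"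
  proof (cases "v \<le> 2")
    case True
    show ?thesis
    proof (rule Bochner_Integration.integrable_bound)
      show "integrable M (\<lambda>\<omega>. 1 + (X 0 \<omega>)\<^sup>2)" using X0sq by simp
      show "AE \<omega> in M. norm (\<bar>X 0 \<omega>\<bar> ^ v) \<le> norm (1 + (X 0 \<omega>)\<^sup>2)"
        using pow_le_sq[OF True] by (intro AE_I2) (simp add: add_nonneg_nonneg)
    qed simp
  next
    case False then show ?thesis using assms(7) by simp
  qed
  define g where "g = (\<lambda>x. (x - \<mu>) ^ v * sgn (\<mu> - x))"
  have gm[measurable]: "g \<in> borel_measurable borel" unfolding g_def by measurable
  have gi: "integrable M (\<lambda>\<omega>. g (X 0 \<omega>))"
  proof (rule Bochner_Integration.integrable_bound)
    show "integrable M (\<lambda>\<omega>. 2 ^ v * (\<bar>X 0 \<omega>\<bar> ^ v + \<bar>\<mu>\<bar> ^ v))" using X0v by simp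
    show "AE \<omega> in M. norm (g (X 0 \<omega>)) \<le> norm (2 ^ v * (\<bar>X 0 \<omega>\<bar> ^ v + \<bar>\<mu>\<bar> ^ v))"
    proof (intro AE_I2)
      fix \<omega>
      have "norm (g (X 0 \<omega>)) \<le> \<bar>X 0 \<omega> - \<mu>\<bar> ^ v"
        unfolding g_def by (simp add: abs_mult power_abs abs_sgn_eq mult_le_cancel_left1)
      also have "\<dots> \<le> 2 ^ v * (\<bar>X 0 \<omega>\<bar> ^ v + \<bar>\<mu>\<bar> ^ v)" by (rule diff_pow_le)
      finally show "norm (g (X 0 \<omega>)) \<le> norm (2 ^ v * (\<bar>X 0 \<omega>\<bar> ^ v + \<bar>\<mu>\<bar> ^ v))" by simp
    qed
  qed simp
  define c0 where "c0 = (\<integral>\<omega>. g (X 0 \<omega>) \<partial>M)"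
  have c0_eq: "(\<integral>x. (X 0 x - \<mu>) ^ v * sgn (\<mu> - X 0 x) \<partial>M) = c0" by (simp add: c0_def g_def)
  define D where "D = (\<lambda>n \<omega>. sample_mean X n \<omega> - \<mu>)"
  define U where "U = (\<lambda>n \<omega>. sqrt (real n) * D n \<omega>)"
  define A where "A = (\<lambda>n \<omega>. (\<Sum>i=1..n. g (X i \<omega>)) / real n)"
  have Dm[measurable]: "D n \<in> borel_measurable M" for n unfolding D_def by measurable
  have Um[measurable]: "U n \<in> borel_measurable M" for n unfolding U_def by measurable
  have Am[measurable]: "A n \<in> borel_measurable M" for n unfolding A_def by measurable
  have tU: "tightP M U"
  proof (rule S.tight_Chebyshev[where C="2 * (\<Sum>i. \<bar>covariance M (X 0) (X i)\<bar>)"])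
    show "U n \<in> borel_measurable M" for n by (rule Um)
    show "integrable M (\<lambda>\<omega>. (U n \<omega>)\<^sup>2)" for n
      using S.second_moment(1)[OF X0sq X0i assms(8), of n] by (simp add: U_def D_def \<mu>_def)
    show "(\<integral>\<omega>. (U n \<omega>)\<^sup>2 \<partial>M) \<le> 2 * (\<Sum>i. \<bar>covariance M (X 0) (X i)\<bar>)" for n
      using S.second_moment(2)[OF X0sq X0i assms(8), of n] by (simp add: U_def D_def \<mu>_def)
  qed
  have cA: "convP M (\<lambda>n \<omega>. A n \<omega> - c0)"
    unfolding convP_def A_def c0_def using ergodic_conv_P[OF assms(1-4) gm gi] by blast
  have cD: "convP M D"
  proof (rule S.convP_mono[where Z="\<lambda>n \<omega>. U n \<omega> * (1 / sqrt (real n))"])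
    show "(\<lambda>\<omega>. U n \<omega> * (1 / sqrt (real n))) \<in> borel_measurable M" for n by measurable
    show "\<forall>\<^sub>F n in sequentially. \<forall>\<omega>\<in>space M. \<bar>D n \<omega>\<bar> \<le> \<bar>U n \<omega> * (1 / sqrt (real n))\<bar>"
      unfolding eventually_sequentially
      by (intro exI[of _ 1] allI impI ballI) (simp add: U_def)
    show "convP M (\<lambda>n \<omega>. U n \<omega> * (1 / sqrt (real n)))"
      by (rule S.convP_mult_tight[OF Um _ tU S.convP_const[OF inv_sqrt_lim]]) simp
  qed
  have cDv: "convP M (\<lambda>n \<omega>. \<bar>D n \<omega>\<bar> ^ v)" by (rule S.convP_pow[OF Dm cD assms(5)])
  have cDv2: "convP M (\<lambda>n \<omega>. \<bar>D n \<omega>\<bar> ^ v + \<bar>D n \<omega>\<bar> ^ v)"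
    by (rule S.convP_add[OF _ _ cDv cDv]) measurable
  have tUa: "tightP M (\<lambda>n \<omega>. \<bar>U n \<omega>\<bar>)" using tU by (simp add: tightP_def)
  have cAa: "convP M (\<lambda>n \<omega>. \<bar>A n \<omega> - c0\<bar>)" using cA by (simp add: convP_def)
  have c1: "convP M (\<lambda>n \<omega>. \<bar>U n \<omega>\<bar> * \<bar>A n \<omega> - c0\<bar>)"
    by (rule S.convP_mult_tight[OF _ _ tUa cAa]) measurable
  have c2: "convP M (\<lambda>n \<omega>. \<bar>U n \<omega>\<bar> * (\<bar>D n \<omega>\<bar> ^ v + \<bar>D n \<omega>\<bar> ^ v))"
    by (rule S.convP_mult_tight[OF _ _ tUa cDv2]) measurable
  have cZ: "convP M (\<lambda>n \<omega>. \<bar>U n \<omega>\<bar> * \<bar>A n \<omega> - c0\<bar> + \<bar>U n \<omega>\<bar> * (\<bar>D n \<omega>\<bar> ^ v + \<bar>D n \<omega>\<bar> ^ v))"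
  proof (rule S.convP_add[OF _ _ c1 c2])
    show "(\<lambda>\<omega>. \<bar>U n \<omega>\<bar> * \<bar>A n \<omega> - c0\<bar>) \<in> borel_measurable M" for n by measurable
    show "(\<lambda>\<omega>. \<bar>U n \<omega>\<bar> * (\<bar>D n \<omega>\<bar> ^ v + \<bar>D n \<omega>\<bar> ^ v)) \<in> borel_measurable M" for n by measurable
  qed
  have main: "convP M (\<lambda>n \<omega>. ((\<Sum>i=1..n. (X i \<omega> - \<mu>) ^ v *
                 (\<bar>X i \<omega> - sample_mean X n \<omega>\<bar> - \<bar>X i \<omega> - \<mu>\<bar>)) / real n
             - (sample_mean X n \<omega> - \<mu>) * c0) / (1 / sqrt (real n)))"
  proof (rule S.convP_mono[OF _ _ cZ])
    show "(\<lambda>\<omega>. \<bar>U n \<omega>\<bar> * \<bar>A n \<omega> - c0\<bar> + \<bar>U n \<omega>\<bar> * (\<bar>D n \<omega>\<bar> ^ v + \<bar>D n \<omega>\<bar> ^ v)) \<in> borel_measurable M" for n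
      by measurable
    show "\<forall>\<^sub>F n in sequentially. \<forall>\<omega>\<in>space M. \<bar>((\<Sum>i=1..n. (X i \<omega> - \<mu>) ^ v *
                 (\<bar>X i \<omega> - sample_mean X n \<omega>\<bar> - \<bar>X i \<omega> - \<mu>\<bar>)) / real n
             - (sample_mean X n \<omega> - \<mu>) * c0) / (1 / sqrt (real n))\<bar>
        \<le> \<bar>\<bar>U n \<omega>\<bar> * \<bar>A n \<omega> - c0\<bar> + \<bar>U n \<omega>\<bar> * (\<bar>D n \<omega>\<bar> ^ v + \<bar>D n \<omega>\<bar> ^ v)\<bar>"
      unfolding eventually_sequentially
    proof (intro exI[of _ 1] allI impI ballI)
      fix n :: nat and \<omega> assume n: "1 \<le> n"
      have sm: "sample_mean X n \<omega> = D n \<omega> + \<mu>" unfolding D_def by simp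
      have K: "\<bar>sqrt (real n) * ((\<Sum>i=1..n. (X i \<omega> - \<mu>) ^ v * (\<bar>X i \<omega> - (D n \<omega> + \<mu>)\<bar> - \<bar>X i \<omega> - \<mu>\<bar>)) / real n - D n \<omega> * c0)\<bar>
          \<le> \<bar>sqrt (real n) * D n \<omega>\<bar> * \<bar>(\<Sum>i=1..n. (X i \<omega> - \<mu>) ^ v * sgn (\<mu> - X i \<omega>)) / real n - c0\<bar>
            + \<bar>sqrt (real n) * D n \<omega>\<bar> * (\<bar>D n \<omega>\<bar> ^ v + \<bar>D n \<omega>\<bar> ^ v)"
        using key_pt[where n=n and x="\<lambda>i. X i \<omega>" and mu=\<mu> and D="D n \<omega>" and cc=c0 and v=v] n by simp
      have nn: "0 \<le> \<bar>U n \<omega>\<bar> * \<bar>A n \<omega> - c0\<bar> + \<bar>U n \<omega>\<bar> * (\<bar>D n \<omega>\<bar> ^ v + \<bar>D n \<omega>\<bar> ^ v)" by simp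
      show "\<bar>((\<Sum>i=1..n. (X i \<omega> - \<mu>) ^ v *
                 (\<bar>X i \<omega> - sample_mean X n \<omega>\<bar> - \<bar>X i \<omega> - \<mu>\<bar>)) / real n
             - (sample_mean X n \<omega> - \<mu>) * c0) / (1 / sqrt (real n))\<bar>
        \<le> \<bar>\<bar>U n \<omega>\<bar> * \<bar>A n \<omega> - c0\<bar> + \<bar>U n \<omega>\<bar> * (\<bar>D n \<omega>\<bar> ^ v + \<bar>D n \<omega>\<bar> ^ v)\<bar>"
        unfolding abs_of_nonneg[OF nn] sm using K by (simp add: U_def A_def g_def mult.commute)
    qed
  qed
  show ?thesis unfolding small_o_P_convP \<mu>_def[symmetric] c0_eq using main .
qed

end
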